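(* Let $\mathbb F_q$ be a finite field and let $A \subseteq \mathbb F_q^n$ and $B \subseteq \mathbb F_q^m$ be nonempty, with $A \times B := \{(x,y) \in \mathbb F_q^{n+m} : x \in A, y \in B\}$. Then: (a) if $0 \in A$ and $0 \in B$, then $\omega(A \times B) = \omega(A) + \omega(B)$; (b) $\omega^\to(A \times B) = \omega^\to(A) + \omega^\to(B)$; (c) $\omega_{\mathrm{aff}}(A \times B) = \omega_{\mathrm{aff}}(A) + \omega_{\mathrm{aff}}(B)$; (d) if $0 \in A$ and $0 \in B$, then $\mathrm{rank}(A \times B) = \mathrm{rank}(A) + \mathrm{rank}(B)$; (e) $\mathrm{rank}_{\mathrm{aff}}(A \times B) = \mathrm{rank}_{\mathrm{aff}}(A) + \mathrm{rank}_{\mathrm{aff}}(B) - 1$.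
   Context: For nonempty $A \subseteq \mathbb F_q^n$: $\omega(A)$ is the largest dimension of a linear subspace of $\mathbb F_q^n$ contained in $A \cup \{0\}$; $\omega_{\mathrm{aff}}(A)$ is the largest dimension of an affine subspace of $\mathbb F_q^n$ contained in $A$; the direction set of $A$ is $A^\to := \{d \in \mathbb F_q^n : \exists x \in \mathbb F_q^n \text{ with } x + \lambda d \in A \text{ for all } \lambda \in \mathbb F_q\}$, and $\omega^\to(A) := \omega(A^\to)$. $\mathrm{rank}(A)$ is the dimension of the linear span of $A$. An affine relation on $x_1,\ldots,x_k$ is an equation $\sum_i \lambda_i x_i = 0$ with $\sum_i \lambda_i = 0$; $A$ is affinely independent if it has no such relation with some $\lambda_i \ne 0$, and $\mathrm{rank}_{\mathrm{aff}}(A)$ is the size of a maximal affinely independent subset of $A$. *)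

theory Defs
  imports "HOL-Analysis.Analysis"
begin

text \<open>Vectors in F_q^n are modelled as 'a ^ 'n with 'a a finite field and 'n a finite
  index type; linear algebra is the library's vector space structure vec (scalar
  multiplication (*s)).\<close>

definition vjoin :: "'a ^ 'n \<Rightarrow> 'a ^ 'm \<Rightarrow> 'a ^ ('n + 'm)" where
  "vjoin x y = (\<chi> i. case i of Inl j \<Rightarrow> x $ j | Inr j \<Rightarrow> y $ j)"

definition vprod :: "('a ^ 'n) set \<Rightarrow> ('a ^ 'm) set \<Rightarrow> ('a ^ ('n + 'm)) set" where
  "vprod A B = {vjoin x y | x y. x \<in> A \<and> y \<in> B}"

definition omega :: "('a::field ^ 'n::finite) set \<Rightarrow> nat" where
  "omega A = Max {vec.dim V | V. vec.subspace V \<and> V \<subseteq> A \<union> {0}}"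

definition omega_aff :: "('a::field ^ 'n::finite) set \<Rightarrow> nat" where
  "omega_aff A = Max {vec.dim W | W x. vec.subspace W \<and> (\<lambda>w. x + w) ` W \<subseteq> A}"

definition dirset :: "('a::field ^ 'n::finite) set \<Rightarrow> ('a ^ 'n) set" where
  "dirset A = {d. \<exists>x. \<forall>t. x + t *s d \<in> A}"

definition omega_dir :: "('a::field ^ 'n::finite) set \<Rightarrow> nat" where
  "omega_dir A = omega (dirset A)"

definition vrank :: "('a::field ^ 'n::finite) set \<Rightarrow> nat" where
  "vrank A = vec.dim (vec.span A)"

definition aff_indep :: "('a::field ^ 'n::finite) set \<Rightarrow> bool" where
  "aff_indep S \<longleftrightarrow> finite S \<and>
     \<not> (\<exists>c :: 'a ^ 'n \<Rightarrow> 'a. (\<Sum>x\<in>S. c x) = 0 \<and> (\<Sum>x\<in>S. c x *s x) = 0 \<and> (\<exists>x\<in>S. c x \<noteq> 0))"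

definition rank_aff :: "('a::field ^ 'n::finite) set \<Rightarrow> nat" where
  "rank_aff A = Max {card S | S. S \<subseteq> A \<and> aff_indep S}"

end

theory Submission
  imports Defs
begin

definition fstv :: "'a ^ ('n::finite + 'm::finite) \<Rightarrow> 'a ^ 'n" where "fstv z = (\<chi> j. z $ Inl j)"
definition sndv :: "'a ^ ('n::finite + 'm::finite) \<Rightarrow> 'a ^ 'm" where "sndv z = (\<chi> j. z $ Inr j)"

lemma fstv_vjoin[simp]: "fstv (vjoin x y) = x" by (simp add: fstv_def vjoin_def)
lemma sndv_vjoin[simp]: "sndv (vjoin x y) = y" by (simp add: sndv_def vjoin_def)
lemma fstv_add: "fstv (x + w) = fstv x + fstv w" by (simp add: fstv_def vec_eq_iff)
lemma sndv_add: "sndv (x + w) = sndv x + sndv w" by (simp add: sndv_def vec_eq_iff)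
lemma vjoin_split: "vjoin (fstv z) (sndv z) = z"
  by (simp add: fstv_def sndv_def vjoin_def vec_eq_iff split: sum.split)
lemma vjoin_eq[simp]: "vjoin x y = vjoin x' y' \<longleftrightarrow> x = x' \<and> y = y'"
  by (metis fstv_vjoin sndv_vjoin)
lemma vjoin_add: "vjoin x y + vjoin x' y' = vjoin (x + x') (y + y')"
  by (simp add: vjoin_def vec_eq_iff split: sum.split)
lemma vjoin_diff: "vjoin x y - vjoin x' y' = vjoin (x - x') (y - y')"
  by (simp add: vjoin_def vec_eq_iff split: sum.split)
lemma vjoin_scale: "c *s vjoin x y = vjoin (c *s x) (c *s y)"
  by (simp add: vjoin_def vec_eq_iff split: sum.split)
lemma vjoin_zero[simp]: "vjoin 0 0 = 0"
  by (simp add: vjoin_def vec_eq_iff split: sum.split)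
lemma vjoin_eq_0[simp]: "vjoin x y = 0 \<longleftrightarrow> x = 0 \<and> y = 0"
  by (metis vjoin_eq vjoin_zero)
lemma ex_vjoin: "(\<exists>z. P z) \<longleftrightarrow> (\<exists>x y. P (vjoin x y))"
  by (metis vjoin_split)
lemma all_vjoin: "(\<forall>z. P z) \<longleftrightarrow> (\<forall>x y. P (vjoin x y))"
  by (metis vjoin_split)
lemma vjoin_in_vprod[simp]: "vjoin x y \<in> vprod A B \<longleftrightarrow> x \<in> A \<and> y \<in> B"
  by (auto simp: vprod_def)
lemma in_vprod: "z \<in> vprod A B \<longleftrightarrow> fstv z \<in> A \<and> sndv z \<in> B"
  by (metis vjoin_in_vprod vjoin_split)

lemma lin_L: "Vector_Spaces.linear ((*s)::'a::field \<Rightarrow> _) (*s) (\<lambda>x::'a^'n::finite. vjoin x (0::'a^'m::finite))"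
  by unfold_locales (simp_all add: vjoin_add vjoin_scale)
lemma lin_R: "Vector_Spaces.linear ((*s)::'a::field \<Rightarrow> _) (*s) (\<lambda>y::'a^'m::finite. vjoin (0::'a^'n::finite) y)"
  by unfold_locales (simp_all add: vjoin_add vjoin_scale)
lemma lin_fstv: "Vector_Spaces.linear ((*s)::'a::field \<Rightarrow> _) (*s) (fstv :: 'a^('n::finite+'m::finite) \<Rightarrow> 'a^'n)"
  by unfold_locales (simp_all add: fstv_def vec_eq_iff)
lemma lin_sndv: "Vector_Spaces.linear ((*s)::'a::field \<Rightarrow> _) (*s) (sndv :: 'a^('n::finite+'m::finite) \<Rightarrow> 'a^'m)"
  by unfold_locales (simp_all add: sndv_def vec_eq_iff)

lemma dim_vprod:
  fixes V1 :: "('a::field ^ 'n::finite) set" and V2 :: "('a ^ 'm::finite) set"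
  assumes "vec.subspace V1" "vec.subspace V2"
  shows "vec.subspace (vprod V1 V2) \<and> vec.dim (vprod V1 V2) = vec.dim V1 + vec.dim V2"
proof -
  interpret L: Vector_Spaces.linear "(*s)" "(*s)" "(\<lambda>x::'a^'n. vjoin x (0::'a^'m))" by (rule lin_L)
  interpret R: Vector_Spaces.linear "(*s)" "(*s)" "(\<lambda>y::'a^'m. vjoin (0::'a^'n) y)" by (rule lin_R)
  let ?L = "(\<lambda>x::'a^'n. vjoin x (0::'a^'m))" and ?R = "(\<lambda>y::'a^'m::finite. vjoin (0::'a^'n::finite) y)"
  have sL: "vec.subspace (?L ` V1)" by (rule L.subspace_image[OF assms(1)])
  have sR: "vec.subspace (?R ` V2)" by (rule R.subspace_image[OF assms(2)])
  have eq: "{x + y |x y. x \<in> ?L ` V1 \<and> y \<in> ?R ` V2} = vprod V1 V2"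
    by (force simp: vprod_def vjoin_add)
  have int: "?L ` V1 \<inter> ?R ` V2 \<subseteq> {0}" by auto
  have d0: "vec.dim (?L ` V1 \<inter> ?R ` V2) = 0"
    using vec.dim_subset[OF int] by simp
  have dL: "vec.dim (?L ` V1) = vec.dim V1"
    by (rule vec.dim_image_eq[OF lin_L]) (auto simp: inj_on_def)
  have dR: "vec.dim (?R ` V2) = vec.dim V2"
    by (rule vec.dim_image_eq[OF lin_R]) (auto simp: inj_on_def)
  have "vec.subspace (vprod V1 V2)"
    using vec.subspace_sums[OF sL sR] eq by simp
  moreover have "vec.dim (vprod V1 V2) = vec.dim V1 + vec.dim V2"
    using vec.dim_sums_Int[OF sL sR] eq d0 dL dR by simp
  ultimately show ?thesis by blast
qed

lemma dim_le_proj: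
  fixes V :: "('a::field ^ ('n::finite + 'm::finite)) set"
  assumes "vec.subspace V"
  shows "vec.subspace (fstv ` V) \<and> vec.subspace (sndv ` V) \<and>
    vec.dim V \<le> vec.dim (fstv ` V) + vec.dim (sndv ` V)"
proof -
  interpret F: Vector_Spaces.linear "(*s)" "(*s)" "fstv :: 'a^('n+'m) \<Rightarrow> 'a^'n" by (rule lin_fstv)
  interpret S: Vector_Spaces.linear "(*s)" "(*s)" "sndv :: 'a^('n+'m) \<Rightarrow> 'a^'m" by (rule lin_sndv)
  have s1: "vec.subspace (fstv ` V)" by (rule F.subspace_image[OF assms])
  have s2: "vec.subspace (sndv ` V)" by (rule S.subspace_image[OF assms])
  have "V \<subseteq> vprod (fstv ` V) (sndv ` V)" by (auto simp: in_vprod)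
  then have "vec.dim V \<le> vec.dim (vprod (fstv ` V) (sndv ` V))" by (rule vec.dim_subset)
  with dim_vprod[OF s1 s2] s1 s2 show ?thesis by simp
qed


lemma dim_bound: "vec.dim (V::('a::field^'n::finite) set) \<le> card (cart_basis::('a^'n) set)"
proof -
  have "vec.dim V \<le> vec.dim (UNIV::('a^'n) set)" by (rule vec.dim_subset) simp
  then show ?thesis by simp
qed

lemma finite_dims: "finite {vec.dim (V::('a::field^'n::finite) set) | V. P V}"
  by (rule finite_subset[of _ "{..card (cart_basis::('a^'n) set)}"]) (auto simp: dim_bound)

lemma finite_dims2: "finite {vec.dim (V::('a::field^'n::finite) set) | V x. P V x}"
  by (rule finite_subset[of _ "{..card (cart_basis::('a^'n) set)}"]) (auto simp: dim_bound)

lemma omega_prod: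
  fixes A :: "('a::field ^ 'n::finite) set" and B :: "('a ^ 'm::finite) set"
  assumes "0 \<in> A" "0 \<in> B"
  shows "omega (vprod A B) = omega A + omega B"
proof -
  let ?SA = "{vec.dim V | V. vec.subspace V \<and> V \<subseteq> A \<union> {0}}"
  let ?SB = "{vec.dim V | V. vec.subspace V \<and> V \<subseteq> B \<union> {0}}"
  let ?S = "{vec.dim V | V. vec.subspace V \<and> V \<subseteq> vprod A B \<union> {0}}"
  have fA: "finite ?SA" and fB: "finite ?SB" and fS: "finite ?S" by (rule finite_dims)+
  have "vec.subspace {0::'a^'n}" by (rule vec.subspace_single_0)
  then have neA: "?SA \<noteq> {}" by blast
  have "vec.subspace {0::'a^'m}" by (rule vec.subspace_single_0)
  then have neB: "?SB \<noteq> {}" by blast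
  obtain V1 where V1: "vec.subspace V1" "V1 \<subseteq> A \<union> {0}" "vec.dim V1 = omega A"
    using Max_in[OF fA neA] unfolding omega_def by auto
  obtain V2 where V2: "vec.subspace V2" "V2 \<subseteq> B \<union> {0}" "vec.dim V2 = omega B"
    using Max_in[OF fB neB] unfolding omega_def by auto
  have "omega A + omega B \<in> ?S"
  proof -
    have "V1 \<subseteq> A" "V2 \<subseteq> B" using V1(2) V2(2) assms by auto
    then have "vprod V1 V2 \<subseteq> vprod A B \<union> {0}" by (auto simp: in_vprod)
    with dim_vprod[OF V1(1) V2(1)] V1(3) V2(3) show ?thesis
      by (intro CollectI exI[of _ "vprod V1 V2"]) auto
  qed
  moreover have "\<forall>d\<in>?S. d \<le> omega A + omega B"
  proof
    fix d assume "d \<in> ?S"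
    then obtain V where V: "vec.subspace V" "V \<subseteq> vprod A B \<union> {0}" "d = vec.dim V" by auto
    note P = dim_le_proj[OF V(1)]
    have "fstv ` V \<subseteq> A \<union> {0}" using V(2) by (auto simp: in_vprod fstv_def vec_eq_iff)
    then have "vec.dim (fstv ` V) \<le> omega A" unfolding omega_def using P fA by (auto intro!: Max_ge)
    moreover have "sndv ` V \<subseteq> B \<union> {0}" using V(2) by (auto simp: in_vprod sndv_def vec_eq_iff)
    then have "vec.dim (sndv ` V) \<le> omega B" unfolding omega_def using P fB by (auto intro!: Max_ge)
    ultimately show "d \<le> omega A + omega B" using P V(3) by linarith
  qed
  ultimately show ?thesis unfolding omega_def[of "vprod A B"] using fS by (intro Max_eqI) auto
qed

lemma dirset_prod:
  fixes A :: "('a::field ^ 'n::finite) set" and B :: "('a ^ 'm::finite) set"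
  shows "dirset (vprod A B) = vprod (dirset A) (dirset B)"
proof (rule set_eqI)
  fix z :: "'a^('n+'m)"
  obtain d1 d2 where z: "z = vjoin d1 d2" by (metis vjoin_split)
  have "z \<in> dirset (vprod A B) \<longleftrightarrow> (\<exists>x1 x2. \<forall>t. x1 + t *s d1 \<in> A \<and> x2 + t *s d2 \<in> B)"
    unfolding dirset_def z by (subst ex_vjoin) (simp add: vjoin_add vjoin_scale)
  also have "\<dots> \<longleftrightarrow> z \<in> vprod (dirset A) (dirset B)"
    unfolding z dirset_def by auto
  finally show "z \<in> dirset (vprod A B) \<longleftrightarrow> z \<in> vprod (dirset A) (dirset B)" .
qed

lemma zero_dirset: "A \<noteq> {} \<Longrightarrow> 0 \<in> dirset A"
  by (auto simp: dirset_def)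

lemma omega_aff_prod:
  fixes A :: "('a::field ^ 'n::finite) set" and B :: "('a ^ 'm::finite) set"
  assumes "A \<noteq> {}" "B \<noteq> {}"
  shows "omega_aff (vprod A B) = omega_aff A + omega_aff B"
proof -
  let ?SA = "{vec.dim W | W x. vec.subspace W \<and> (\<lambda>w. x + w) ` W \<subseteq> A}"
  let ?SB = "{vec.dim W | W x. vec.subspace W \<and> (\<lambda>w. x + w) ` W \<subseteq> B}"
  let ?S = "{vec.dim W | W x. vec.subspace W \<and> (\<lambda>w. x + w) ` W \<subseteq> vprod A B}"
  have fA: "finite ?SA" and fB: "finite ?SB" and fS: "finite ?S" by (rule finite_dims2)+
  obtain a where a: "a \<in> A" using assms by auto
  obtain b where b: "b \<in> B" using assms by auto
  have "vec.subspace {0::'a^'n}" by (rule vec.subspace_single_0)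
  then have neA: "?SA \<noteq> {}" using a by fastforce
  have "vec.subspace {0::'a^'m}" by (rule vec.subspace_single_0)
  then have neB: "?SB \<noteq> {}" using b by fastforce
  obtain V1 x1 where V1: "vec.subspace V1" "(\<lambda>w. x1 + w) ` V1 \<subseteq> A" "vec.dim V1 = omega_aff A"
    using Max_in[OF fA neA] unfolding omega_aff_def by auto
  obtain V2 x2 where V2: "vec.subspace V2" "(\<lambda>w. x2 + w) ` V2 \<subseteq> B" "vec.dim V2 = omega_aff B"
    using Max_in[OF fB neB] unfolding omega_aff_def by auto
  have "omega_aff A + omega_aff B \<in> ?S"
  proof -
    have "(\<lambda>w. vjoin x1 x2 + w) ` vprod V1 V2 \<subseteq> vprod A B"
      
    proof clarify
      fix z assume "z \<in> vprod V1 V2"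
      then obtain w1 w2 where "z = vjoin w1 w2" "w1 \<in> V1" "w2 \<in> V2" by (auto simp: vprod_def)
      then show "vjoin x1 x2 + z \<in> vprod A B" using V1(2) V2(2) by (auto simp: vjoin_add)
    qed
    with dim_vprod[OF V1(1) V2(1)] V1(3) V2(3) show ?thesis
      by (intro CollectI exI[of _ "vprod V1 V2"] exI[of _ "vjoin x1 x2"]) auto
  qed
  moreover have "\<forall>d\<in>?S. d \<le> omega_aff A + omega_aff B"
  proof
    fix d assume "d \<in> ?S"
    then obtain V x where V: "vec.subspace V" "(\<lambda>w. x + w) ` V \<subseteq> vprod A B" "d = vec.dim V" by auto
    note P = dim_le_proj[OF V(1)]
    have "(\<lambda>w. fstv x + w) ` (fstv ` V) \<subseteq> A"
    proof clarify
      fix w assume "w \<in> V"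
      then have "x + w \<in> vprod A B" using V(2) by auto
      then show "fstv x + fstv w \<in> A" by (simp add: in_vprod fstv_add)
    qed
    then have "vec.dim (fstv ` V) \<le> omega_aff A" unfolding omega_aff_def using P fA by (auto intro!: Max_ge)
    moreover have "(\<lambda>w. sndv x + w) ` (sndv ` V) \<subseteq> B"
    proof clarify
      fix w assume "w \<in> V"
      then have "x + w \<in> vprod A B" using V(2) by auto
      then show "sndv x + sndv w \<in> B" by (simp add: in_vprod sndv_add)
    qed
    then have "vec.dim (sndv ` V) \<le> omega_aff B" unfolding omega_aff_def using P fB by (auto intro!: Max_ge)
    ultimately show "d \<le> omega_aff A + omega_aff B" using P V(3) by linarith
  qed
  ultimately show ?thesis unfolding omega_aff_def[of "vprod A B"] using fS by (intro Max_eqI) auto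
qed

lemma span_vprod:
  fixes A :: "('a::field ^ 'n::finite) set" and B :: "('a ^ 'm::finite) set"
  assumes "0 \<in> A" "0 \<in> B"
  shows "vec.span (vprod A B) = vprod (vec.span A) (vec.span B)"
proof
  have "vec.subspace (vprod (vec.span A) (vec.span B))"
    using dim_vprod[OF vec.subspace_span vec.subspace_span] by blast
  moreover have "vprod A B \<subseteq> vprod (vec.span A) (vec.span B)"
    by (auto simp: in_vprod intro: vec.span_base)
  ultimately show "vec.span (vprod A B) \<subseteq> vprod (vec.span A) (vec.span B)"
    by (rule vec.span_minimal[rotated])
next
  interpret L: Vector_Spaces.linear "(*s)" "(*s)" "(\<lambda>x::'a^'n. vjoin x (0::'a^'m))" by (rule lin_L)
  interpret R: Vector_Spaces.linear "(*s)" "(*s)" "(\<lambda>y::'a^'m. vjoin (0::'a^'n) y)" by (rule lin_R)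
  show "vprod (vec.span A) (vec.span B) \<subseteq> vec.span (vprod A B)"
  proof clarify
    fix z assume "z \<in> vprod (vec.span A) (vec.span B)"
    then obtain x y where z: "z = vjoin x y" "x \<in> vec.span A" "y \<in> vec.span B" by (auto simp: vprod_def)
    have "vjoin x 0 \<in> (\<lambda>x::'a^'n. vjoin x (0::'a^'m)) ` vec.span A" using z by auto
    also have "\<dots> = vec.span ((\<lambda>x::'a^'n. vjoin x (0::'a^'m)) ` A)" by (rule L.span_image[symmetric])
    also have "\<dots> \<subseteq> vec.span (vprod A B)" by (rule vec.span_mono) (use assms in auto)
    finally have 1: "vjoin x 0 \<in> vec.span (vprod A B)" .
    have "vjoin 0 y \<in> (\<lambda>y::'a^'m. vjoin (0::'a^'n) y) ` vec.span B" using z by auto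
    also have "\<dots> = vec.span ((\<lambda>y::'a^'m. vjoin (0::'a^'n) y) ` B)" by (rule R.span_image[symmetric])
    also have "\<dots> \<subseteq> vec.span (vprod A B)" by (rule vec.span_mono) (use assms in auto)
    finally have 2: "vjoin 0 y \<in> vec.span (vprod A B)" .
    from vec.span_add[OF 1 2] show "z \<in> vec.span (vprod A B)" by (simp add: z vjoin_add)
  qed
qed

lemma vrank_prod:
  fixes A :: "('a::field ^ 'n::finite) set" and B :: "('a ^ 'm::finite) set"
  assumes "0 \<in> A" "0 \<in> B"
  shows "vrank (vprod A B) = vrank A + vrank B"
  unfolding vrank_def span_vprod[OF assms]
  using dim_vprod[OF vec.subspace_span vec.subspace_span] by blast


lemma aff_upper:
  fixes A :: "('a::field ^ 'n::finite) set"
  assumes a: "a \<in> A" and S: "S \<subseteq> A" "aff_indep S"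
  shows "card S \<le> vec.dim ((\<lambda>x. x - a) ` A) + 1"
proof (cases "S = {}")
  case True then show ?thesis by simp
next
  case False
  then obtain s0 where s0: "s0 \<in> S" by auto
  have fS: "finite S" using S(2) by (simp add: aff_indep_def)
  let ?T = "(\<lambda>x. x - a) ` A"
  let ?S' = "(\<lambda>x. x - s0) ` (S - {s0})"
  have inj: "inj_on (\<lambda>x. x - s0) (S - {s0})" by (auto simp: inj_on_def)
  have cS': "card ?S' = card S - 1" using card_image[OF inj] s0 fS by simp
  have sub: "?S' \<subseteq> vec.span ?T"
  proof
    fix z assume "z \<in> ?S'"
    then obtain x where x: "x \<in> S" "z = x - s0" by auto
    have "x - a \<in> vec.span ?T" using x S(1) by (auto intro!: vec.span_base)
    moreover have "s0 - a \<in> vec.span ?T" using s0 S(1) by (auto intro!: vec.span_base)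
    ultimately have "(x - a) - (s0 - a) \<in> vec.span ?T" by (rule vec.span_diff)
    then show "z \<in> vec.span ?T" using x by simp
  qed
  have ind: "vec.independent ?S'"
    unfolding vec.independent_explicit
  proof (intro conjI allI impI ballI)
    show "finite ?S'" using fS by simp
  next
    fix c v assume c: "(\<Sum>v\<in>?S'. c v *s v) = 0" and v: "v \<in> ?S'"
    define c' where "c' x = (if x = s0 then - (\<Sum>y\<in>S-{s0}. c (y - s0)) else c (x - s0))" for x
    have e1: "(\<Sum>x\<in>S. c' x) = 0"
      using sum.remove[OF fS s0, of c'] by (simp add: c'_def)
    have "(\<Sum>v\<in>?S'. c v *s v) = (\<Sum>x\<in>S-{s0}. c (x - s0) *s (x - s0))"
      by (simp add: sum.reindex[OF inj])
    also have "\<dots> = (\<Sum>x\<in>S-{s0}. c (x - s0) *s x) - (\<Sum>x\<in>S-{s0}. c (x - s0)) *s s0"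
      by (simp add: vec.scale_right_diff_distrib sum_subtractf vec.scale_sum_left)
    also have "\<dots> = (\<Sum>x\<in>S. c' x *s x)"
      using sum.remove[OF fS s0, of "\<lambda>x. c' x *s x"] by (simp add: c'_def)
    finally have e2: "(\<Sum>x\<in>S. c' x *s x) = 0" using c by simp
    have "\<forall>x\<in>S. c' x = 0" using S(2) e1 e2 unfolding aff_indep_def by blast
    moreover obtain x where x: "x \<in> S" "x \<noteq> s0" "v = x - s0" using v by auto
    ultimately have "c' x = 0" by blast
    with x show "c v = 0" by (simp add: c'_def)
  qed
  have "card ?S' \<le> vec.dim (vec.span ?T)" by (rule vec.independent_card_le_dim[OF sub ind])
  then have "card ?S' \<le> vec.dim ?T" by simp
  with cS' show ?thesis by linarith
qed

lemma aff_lower: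
  fixes A :: "('a::field ^ 'n::finite) set"
  assumes a: "a \<in> A"
  shows "\<exists>S. S \<subseteq> A \<and> aff_indep S \<and> card S = vec.dim ((\<lambda>x. x - a) ` A) + 1"
proof -
  let ?T = "(\<lambda>x. x - a) ` A"
  obtain B where B: "B \<subseteq> ?T" "vec.independent B" "?T \<subseteq> vec.span B" "card B = vec.dim ?T"
    using vec.basis_exists[of ?T] by blast
  have fB: "finite B" using B(2) by (rule vec.finiteI_independent)
  have B0: "0 \<notin> B" using B(2) vec.dependent_zero by blast
  let ?S = "insert a ((\<lambda>v. v + a) ` B)"
  have inj: "inj_on (\<lambda>v. v + a) B" by (auto simp: inj_on_def)
  have anot: "a \<notin> (\<lambda>v. v + a) ` B" using B0 by auto
  have card: "card ?S = card B + 1" using fB anot card_image[OF inj] by simp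
  have sub: "?S \<subseteq> A" using a B(1) by auto
  have fS: "finite ?S" using fB by simp
  have "aff_indep ?S"
    unfolding aff_indep_def
  proof (intro conjI fS notI)
    assume "\<exists>c. (\<Sum>x\<in>?S. c x) = 0 \<and> (\<Sum>x\<in>?S. c x *s x) = 0 \<and> (\<exists>x\<in>?S. c x \<noteq> 0)"
    then obtain c where c1: "(\<Sum>x\<in>?S. c x) = 0" and c2: "(\<Sum>x\<in>?S. c x *s x) = 0"
      and c3: "\<exists>x\<in>?S. c x \<noteq> 0" by blast
    have s1: "c a + (\<Sum>v\<in>B. c (v + a)) = 0"
      using c1 fB anot by (simp add: sum.reindex[OF inj])
    have "(\<Sum>x\<in>?S. c x *s x) = c a *s a + (\<Sum>v\<in>B. c (v + a) *s (v + a))"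
      using fB anot by (simp add: sum.reindex[OF inj])
    also have "\<dots> = (c a + (\<Sum>v\<in>B. c (v + a))) *s a + (\<Sum>v\<in>B. c (v + a) *s v)"
      by (simp add: vec.scale_right_distrib sum.distrib vec.scale_sum_left vec.scale_left_distrib)
    also have "\<dots> = (\<Sum>v\<in>B. c (v + a) *s v)" using s1 by simp
    finally have "(\<Sum>v\<in>B. c (v + a) *s v) = 0" using c2 by simp
    then have z: "\<forall>v\<in>B. c (v + a) = 0"
      using B(2) unfolding vec.independent_explicit
      apply (elim conjE)
      apply (drule spec[of _ "\<lambda>v. c (v + a)"])
      by simp
    then have "(\<Sum>v\<in>B. c (v + a)) = 0" by simp
    with s1 have "c a = 0" by simp
    with z c3 show False by auto
  qed
  with sub card B(4) show ?thesis by (intro exI[of _ ?S]) simp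
qed

lemma rank_aff_eq:
  fixes A :: "('a::field ^ 'n::finite) set"
  assumes a: "a \<in> A"
  shows "rank_aff A = vrank ((\<lambda>x. x - a) ` A) + 1"
proof -
  let ?R = "{card S | S. S \<subseteq> A \<and> aff_indep S}"
  have fin: "finite ?R"
    by (rule finite_subset[of _ "{..vec.dim ((\<lambda>x. x - a) ` A) + 1}"]) (auto dest: aff_upper[OF a])
  have "rank_aff A = vec.dim ((\<lambda>x. x - a) ` A) + 1"
    unfolding rank_aff_def
  proof (rule Max_eqI[OF fin])
    show "y \<le> vec.dim ((\<lambda>x. x - a) ` A) + 1" if "y \<in> ?R" for y
      using that aff_upper[OF a] by auto
    obtain S where "S \<subseteq> A" "aff_indep S" "card S = vec.dim ((\<lambda>x. x - a) ` A) + 1"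
      using aff_lower[OF a] by blast
    then show "vec.dim ((\<lambda>x. x - a) ` A) + 1 \<in> ?R" by (intro CollectI exI[of _ S]) simp
  qed
  then show ?thesis by (simp add: vrank_def)
qed

lemma rank_aff_prod:
  fixes A :: "('a::field ^ 'n::finite) set" and B :: "('a ^ 'm::finite) set"
  assumes "A \<noteq> {}" "B \<noteq> {}"
  shows "rank_aff (vprod A B) = rank_aff A + rank_aff B - 1"
proof -
  obtain a where a: "a \<in> A" using assms by auto
  obtain b where b: "b \<in> B" using assms by auto
  have ab: "vjoin a b \<in> vprod A B" using a b by simp
  have eq: "(\<lambda>z. z - vjoin a b) ` vprod A B = vprod ((\<lambda>x. x - a) ` A) ((\<lambda>y. y - b) ` B)"
  proof
    show "(\<lambda>z. z - vjoin a b) ` vprod A B \<subseteq> vprod ((\<lambda>x. x - a) ` A) ((\<lambda>y. y - b) ` B)"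
      by (auto simp: vprod_def vjoin_diff)
    show "vprod ((\<lambda>x. x - a) ` A) ((\<lambda>y. y - b) ` B) \<subseteq> (\<lambda>z. z - vjoin a b) ` vprod A B"
    proof clarify
      fix z assume "z \<in> vprod ((\<lambda>x. x - a) ` A) ((\<lambda>y. y - b) ` B)"
      then obtain x y where "z = vjoin (x - a) (y - b)" "x \<in> A" "y \<in> B" by (auto simp: vprod_def)
      then show "z \<in> (\<lambda>z. z - vjoin a b) ` vprod A B"
        by (intro image_eqI[of _ _ "vjoin x y"]) (auto simp: vjoin_diff)
    qed
  qed
  have "rank_aff (vprod A B) = vrank (vprod ((\<lambda>x. x - a) ` A) ((\<lambda>y. y - b) ` B)) + 1"
    using rank_aff_eq[OF ab] eq by simp
  also have "\<dots> = vrank ((\<lambda>x. x - a) ` A) + vrank ((\<lambda>y. y - b) ` B) + 1"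
    using a b by (subst vrank_prod) auto
  finally show ?thesis using rank_aff_eq[OF a] rank_aff_eq[OF b] by simp
qed

theorem proposition2p1:
  fixes A :: "('a::{field,finite} ^ 'n::finite) set" and B :: "('a ^ 'm::finite) set"
  assumes "A \<noteq> {}" and "B \<noteq> {}"
  shows "(0 \<in> A \<and> 0 \<in> B \<longrightarrow> omega (vprod A B) = omega A + omega B)
    \<and> omega_dir (vprod A B) = omega_dir A + omega_dir B
    \<and> omega_aff (vprod A B) = omega_aff A + omega_aff B
    \<and> (0 \<in> A \<and> 0 \<in> B \<longrightarrow> vrank (vprod A B) = vrank A + vrank B)
    \<and> rank_aff (vprod A B) = rank_aff A + rank_aff B - 1"
  using omega_prod[of A B] omega_aff_prod[OF assms] vrank_prod[of A B] rank_aff_prod[OF assms]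
    omega_prod[OF zero_dirset[OF assms(1)] zero_dirset[OF assms(2)]]
  by (simp add: omega_dir_def dirset_prod)

end
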